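(* Let $q$ be a positive integer which is not prime, with $q_0\ge 4$, and let $n$ be an integer with $2\le n\le q_0-2$. Then \[ |I_0(q,n)|\ \ge\ \frac{1}{q_0}\binom{q_0}{n}. \]
   Context: Set $q_0=(q-1)/2$ if $q$ is odd and $q_0=q/2$ if $q$ is even. Let $\widetilde I(q,n)$ be the set of $n$-tuples of integers and $\widetilde I_0(q,n)=\{(p_1,\dots,p_n)\in\widetilde I(q,n): p_i\not\equiv \pm p_j \pmod q \text{ for } 1\le i<j\le n,\ \gcd(p_1,\dots,p_n,q)=1\}$. Two tuples $(p_1,\dots,p_n)$ and $(s_1,\dots,s_n)$ are equivalent if there exist an integer $l$ coprime to $q$ and signs $e_i\in\{-1,1\}$ such that $(p_1,\dots,p_n)$ is a permutation of $(e_1ls_1,\dots,e_nls_n)$ modulo $q$. $I_0(q,n)=\widetilde I_0(q,n)/\!\sim$. *)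

theory Defs
  imports "HOL-Number_Theory.Number_Theory" "HOL-Combinatorics.Permutations"
begin

definition q0 :: "nat \<Rightarrow> nat" where
  "q0 q = (if odd q then (q - 1) div 2 else q div 2)"

definition I0_tilde :: "nat \<Rightarrow> nat \<Rightarrow> int list set" where
  "I0_tilde q n = {p. length p = n \<and>
      (\<forall>i j. i < j \<and> j < n \<longrightarrow>
          \<not> [p ! i = p ! j] (mod int q) \<and> \<not> [p ! i = - (p ! j)] (mod int q)) \<and>
      Gcd (insert (int q) (set p)) = 1}"

definition tuple_equiv :: "nat \<Rightarrow> nat \<Rightarrow> int list \<Rightarrow> int list \<Rightarrow> bool" where
  "tuple_equiv q n p s \<longleftrightarrow>
     (\<exists>(l::int) (e::nat \<Rightarrow> int) \<sigma>. coprime l (int q) \<and> (\<forall>i<n. e i \<in> {-1, 1}) \<and>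
        \<sigma> permutes {..<n} \<and>
        (\<forall>i<n. [p ! i = e (\<sigma> i) * l * s ! (\<sigma> i)] (mod int q)))"

definition I0_rel :: "nat \<Rightarrow> nat \<Rightarrow> (int list \<times> int list) set" where
  "I0_rel q n = {(p, s). p \<in> I0_tilde q n \<and> s \<in> I0_tilde q n \<and> tuple_equiv q n p s}"

definition I0 :: "nat \<Rightarrow> nat \<Rightarrow> int list set set" where
  "I0 q n = I0_tilde q n // I0_rel q n"

end

theory Submission imports Defs begin

lemma q0_bound: "q > 0 \<Longrightarrow> 2 * q0 q \<le> q"
  unfolding q0_def by auto

lemma range_eq:
  fixes x y :: int
  assumes "q > 0" "1 \<le> x" "x \<le> int (q0 q)" "1 \<le> y" "y \<le> int (q0 q)"
    and "[x = y] (mod int q) \<or> [x = - y] (mod int q)"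
  shows "x = y"
proof -
  have b: "2 * int (q0 q) \<le> int q" using q0_bound[OF assms(1)] by linarith
  from assms(6) show ?thesis
  proof
    assume "[x = y] (mod int q)"
    then obtain k where k: "x - y = int q * k" by (auto simp: cong_iff_dvd_diff dvd_def)
    have "k = 0"
    proof (rule ccontr)
      assume "k \<noteq> 0"
      hence "\<bar>k\<bar> \<ge> 1" by simp
      hence "int q * 1 \<le> int q * \<bar>k\<bar>" by (intro mult_left_mono) auto
      hence "\<bar>int q * k\<bar> \<ge> int q" by (simp add: abs_mult)
      thus False using k b assms by linarith
    qed
    thus ?thesis using k by simp
  next
    assume "[x = - y] (mod int q)"
    then obtain k where k: "x + y = int q * k" by (auto simp: cong_iff_dvd_diff dvd_def)
    have "k = 1"
    proof (rule ccontr)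
      assume "k \<noteq> 1"
      hence "k \<le> 0 \<or> k \<ge> 2" by linarith
      thus False
      proof
        assume "k \<le> 0" hence "int q * k \<le> 0" by (simp add: mult_nonneg_nonpos)
        thus False using k assms by linarith
      next
        assume "k \<ge> 2" hence "int q * k \<ge> int q * 2" by (intro mult_left_mono) auto
        thus False using k assms b by linarith
      qed
    qed
    hence "x + y = int q" using k by simp
    thus ?thesis using b assms by linarith
  qed
qed

lemma range_eq_sign:
  fixes x y w :: int
  assumes "q > 0" "1 \<le> x" "x \<le> int (q0 q)" "1 \<le> y" "y \<le> int (q0 q)"
    and "w \<in> {-1, 1}" and "[x = w * y] (mod int q)"
  shows "x = y"
  using assms range_eq[OF assms(1-5)] by auto

definition pl :: "nat set \<Rightarrow> int list" where
  "pl A = map int (sorted_list_of_set A)"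

definition G :: "nat \<Rightarrow> nat set \<Rightarrow> int \<Rightarrow> nat set" where
  "G q A c = {b \<in> {1..q0 q}. \<exists>a\<in>A. [int a = c * int b] (mod int q) \<or> [int a = - (c * int b)] (mod int q)}"

definition Bs :: "nat \<Rightarrow> nat \<Rightarrow> nat set set" where
  "Bs q n = {A. A \<subseteq> {1..q0 q} \<and> card A = n \<and> 1 \<in> A}"

lemma pl_facts:
  assumes "finite A"
  shows "length (pl A) = card A" "set (pl A) = int ` A" "distinct (pl A)"
  using assms by (auto simp: pl_def distinct_map inj_on_def)

lemma Bs_finite: "A \<in> Bs q n \<Longrightarrow> finite A"
  unfolding Bs_def using finite_subset by blast

lemma pl_in:
  assumes q: "q > 0" and A: "A \<in> Bs q n"
  shows "pl A \<in> I0_tilde q n"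
proof -
  have fin: "finite A" using Bs_finite[OF A] .
  have sub: "A \<subseteq> {1..q0 q}" and cA: "card A = n" and one: "1 \<in> A" using A by (auto simp: Bs_def)
  note pf = pl_facts[OF fin]
  have rng: "1 \<le> x \<and> x \<le> int (q0 q)" if "x \<in> set (pl A)" for x
    using that pf(2) sub by auto
  have dist: "\<not> [pl A ! i = pl A ! j] (mod int q) \<and> \<not> [pl A ! i = - (pl A ! j)] (mod int q)"
    if "i < j" "j < n" for i j
  proof -
    have "i < length (pl A)" "j < length (pl A)" using that pf(1) cA by auto
    hence ne: "pl A ! i \<noteq> pl A ! j" using pf(3) that(1) by (simp add: nth_eq_iff_index_eq)
    have "pl A ! i \<in> set (pl A)" "pl A ! j \<in> set (pl A)" using \<open>i < length (pl A)\<close> \<open>j < length (pl A)\<close> by auto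
    thus ?thesis using range_eq[OF q] rng ne by blast
  qed
  have "Gcd (insert (int q) (set (pl A))) = 1"
    by (rule Gcd_eq_1_I[of 1]) (use one pf(2) in auto)
  thus ?thesis using dist pf(1) cA unfolding I0_tilde_def by auto
qed

lemma sign_mult: "u \<in> {-1,1::int} \<Longrightarrow> v \<in> {-1,1} \<Longrightarrow> u * v \<in> {-1,1}" by auto
lemma sign_sq: "u \<in> {-1,1::int} \<Longrightarrow> u * u = 1" by auto

lemma fiber:
  assumes q: "q > 0" and A: "A \<in> Bs q n" and A': "A' \<in> Bs q n"
    and te: "tuple_equiv q n (pl A) (pl A')"
  shows "\<exists>i<n. A' = G q A (pl A ! i)"
proof -
  define p where "p = pl A"
  define s where "s = pl A'"
  have finA: "finite A" and finA': "finite A'" using Bs_finite A A' by auto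
  have subA: "A \<subseteq> {1..q0 q}" and subA': "A' \<subseteq> {1..q0 q}" and one: "1 \<in> A'"
    using A A' by (auto simp: Bs_def)
  have lp: "length p = n" and ls: "length s = n"
    using pl_facts(1)[OF finA] pl_facts(1)[OF finA'] A A' by (auto simp: Bs_def p_def s_def)
  have sp: "set p = int ` A" and ss: "set s = int ` A'"
    using pl_facts(2)[OF finA] pl_facts(2)[OF finA'] by (auto simp: p_def s_def)
  from te obtain l e \<sigma> where l: "coprime l (int q)" and e: "\<forall>i<n. e i \<in> {-1, 1}"
    and \<sigma>: "\<sigma> permutes {..<n}" and eq: "\<forall>i<n. [p ! i = e (\<sigma> i) * l * s ! (\<sigma> i)] (mod int q)"
    unfolding tuple_equiv_def p_def s_def by blast
  have "1 \<in> set s" using one ss by force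
  then obtain k where k: "k < n" "s ! k = 1" using ls by (auto simp: in_set_conv_nth)
  have "k \<in> \<sigma> ` {..<n}" using permutes_image[OF \<sigma>] k by auto
  then obtain i where i: "i < n" "\<sigma> i = k" by auto
  define c where "c = p ! i"
  have ci: "[c = e k * l] (mod int q)" using eq[rule_format, of i] i k by (simp add: c_def)
  have ek: "e k \<in> {-1,1}" using e k by auto
  have hl: "[c * int b = l * (e k * int b)] (mod int q)" for b
  proof -
    have "[c * int b = (e k * l) * int b] (mod int q)" using ci by (rule cong_mult) simp
    thus ?thesis by (simp add: ac_simps)
  qed
  have "A' = G q A c"
  proof
    show "A' \<subseteq> G q A c"
    proof
      fix b assume b: "b \<in> A'"
      have "int b \<in> set s" using b ss by auto
      then obtain k' where k': "k' < n" "s ! k' = int b" using ls by (auto simp: in_set_conv_nth)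
      have "k' \<in> \<sigma> ` {..<n}" using permutes_image[OF \<sigma>] k' by auto
      then obtain i' where i': "i' < n" "\<sigma> i' = k'" by auto
      have h0: "[p ! i' = e k' * l * int b] (mod int q)" using eq[rule_format, of i'] i' k' by simp
      have E: "e k' * l * int b = l * (e k' * int b)" by (simp add: ac_simps)
      have h1: "[p ! i' = l * (e k' * int b)] (mod int q)" using h0 by (simp only: E)
      have "p ! i' \<in> set p" using i' lp by auto
      then obtain a where a: "a \<in> A" "p ! i' = int a" using sp by auto
      have ek': "e k' \<in> {-1,1}" using e k' by auto
      have "[l * (e k' * int b) = (e k' * e k) * (l * (e k * int b))] (mod int q)"
        using sign_sq[OF ek] by (simp add: ac_simps)
      moreover have "[(e k' * e k) * (l * (e k * int b)) = (e k' * e k) * (c * int b)] (mod int q)"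
        by (rule cong_mult[OF cong_refl cong_sym[OF hl]])
      ultimately have "[int a = (e k' * e k) * (c * int b)] (mod int q)"
        using h1 a by (metis cong_trans)
      moreover have "e k' * e k \<in> {-1,1}" using sign_mult[OF ek' ek] .
      ultimately have "[int a = c * int b] (mod int q) \<or> [int a = - (c * int b)] (mod int q)"
        by auto
      thus "b \<in> G q A c" using a b subA' unfolding G_def by auto
    qed
  next
    show "G q A c \<subseteq> A'"
    proof
      fix b assume "b \<in> G q A c"
      then obtain a where b: "b \<in> {1..q0 q}" and a: "a \<in> A"
        and ca: "[int a = c * int b] (mod int q) \<or> [int a = - (c * int b)] (mod int q)"
        unfolding G_def by auto
      obtain u where u: "u \<in> {-1,1}" and ca': "[int a = u * (c * int b)] (mod int q)"
        using ca by (metis insert_iff mult_minus_left mult_1)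
      have "int a \<in> set p" using a sp by auto
      then obtain i' where i': "i' < n" "p ! i' = int a" using lp by (auto simp: in_set_conv_nth)
      define e' where "e' = e (\<sigma> i')"
      define t where "t = s ! (\<sigma> i')"
      have si: "\<sigma> i' < n" using permutes_image[OF \<sigma>] i' by auto
      have e': "e' \<in> {-1,1}" using e si by (auto simp: e'_def)
      have "t \<in> set s" using si ls by (auto simp: t_def)
      then obtain b' where b': "b' \<in> A'" "t = int b'" using ss by auto
      have h0: "[int a = e' * l * t] (mod int q)" using eq[rule_format, of i'] i' by (simp add: e'_def t_def)
      have E: "e' * l * t = l * (e' * t)" by (simp add: ac_simps)
      have h1: "[int a = l * (e' * t)] (mod int q)" using h0 by (simp only: E)
      have "[u * (c * int b) = u * (l * (e k * int b))] (mod int q)"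
        by (rule cong_mult[OF cong_refl hl])
      hence "[l * (e' * t) = l * (u * e k * int b)] (mod int q)"
        using h1 ca' by (metis cong_sym cong_trans mult.left_commute mult.assoc)
      hence "[e' * t = u * e k * int b] (mod int q)" using cong_mult_lcancel[OF l] by blast
      hence "[e' * (e' * t) = e' * (u * e k * int b)] (mod int q)" by (rule cong_mult[OF cong_refl])
      moreover have "e' * (e' * t) = t" using sign_sq[OF e'] by (metis mult.assoc mult_1)
      moreover have "e' * (u * e k * int b) = (e' * u * e k) * int b" by (simp add: mult.assoc)
      ultimately have "[t = (e' * u * e k) * int b] (mod int q)" by simp
      moreover have "e' * u * e k \<in> {-1,1}" using sign_mult[OF sign_mult[OF e' u] ek] .
      moreover have "1 \<le> t" "t \<le> int (q0 q)" using b' subA' by auto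
      ultimately have "t = int b" using range_eq_sign[OF q] b by auto
      thus "b \<in> A'" using b' by simp
    qed
  qed
  thus ?thesis using i by (auto simp: c_def p_def)
qed

theorem proposition2p1p1:
  fixes q n :: nat
  assumes "q > 0" and "\<not> prime q" and "q0 q \<ge> 4"
    and "2 \<le> n" and "n + 2 \<le> q0 q"
  shows "real (card (I0 q n)) \<ge> (1 / real (q0 q)) * real (q0 q choose n)"
proof -
  note q = assms(1)
  define T where "T = I0_tilde q n"
  define r where "r = I0_rel q n"
  define Hf where "Hf y = {s \<in> T. tuple_equiv q n y s}" for y
  have rx: "r `` {x} = Hf (map (\<lambda>a. a mod int q) x)" if x: "x \<in> T" for x
  proof -
    have len: "length x = n" using x by (simp add: T_def I0_tilde_def)
    have "tuple_equiv q n x s = tuple_equiv q n (map (\<lambda>a. a mod int q) x) s" for s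
      unfolding tuple_equiv_def cong_def using len by simp
    thus ?thesis using x by (auto simp: r_def Hf_def I0_rel_def T_def)
  qed
  have finQ: "finite (I0 q n)"
  proof (rule finite_subset)
    show "I0 q n \<subseteq> Hf ` {ys. set ys \<subseteq> {0..<int q} \<and> length ys = n}"
    proof
      fix c assume "c \<in> I0 q n"
      then obtain x where x: "x \<in> T" and c: "c = r `` {x}"
        unfolding I0_def T_def r_def by (auto elim: quotientE)
      have "set (map (\<lambda>a. a mod int q) x) \<subseteq> {0..<int q}" using q by auto
      moreover have "length (map (\<lambda>a. a mod int q) x) = n" using x by (simp add: T_def I0_tilde_def)
      ultimately show "c \<in> Hf ` {ys. set ys \<subseteq> {0..<int q} \<and> length ys = n}"
        using c rx[OF x] by blast
    qed
    show "finite (Hf ` {ys. set ys \<subseteq> {0..<int q} \<and> length ys = n})"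
      by (intro finite_imageI finite_lists_length_eq) simp
  qed
  define f where "f A = r `` {pl A}" for A
  have fQ: "f A \<in> I0 q n" if "A \<in> Bs q n" for A
    unfolding f_def I0_def r_def using pl_in[OF q that] by (auto intro: quotientI)
  have refl: "tuple_equiv q n p p" for p
    unfolding tuple_equiv_def
    by (rule exI[of _ 1], rule exI[of _ "\<lambda>_. 1"], rule exI[of _ id]) (auto simp: permutes_id)
  have feq: "tuple_equiv q n (pl A) (pl A')" if "A \<in> Bs q n" "A' \<in> Bs q n" "f A = f A'" for A A'
  proof -
    have "pl A' \<in> f A'" using pl_in[OF q that(2)] refl by (auto simp: f_def r_def I0_rel_def)
    hence "pl A' \<in> f A" using that(3) by simp
    thus ?thesis by (auto simp: f_def r_def I0_rel_def)
  qed
  define rep where "rep c = (SOME A. A \<in> Bs q n \<and> f A = c)" for c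
  have cover: "Bs q n \<subseteq> (\<lambda>(c,i). G q (rep c) (pl (rep c) ! i)) ` (f ` Bs q n \<times> {..<n})"
  proof
    fix A' assume A': "A' \<in> Bs q n"
    have "rep (f A') \<in> Bs q n \<and> f (rep (f A')) = f A'"
      unfolding rep_def by (rule someI[of _ A']) (use A' in auto)
    then obtain i where i: "i < n" "A' = G q (rep (f A')) (pl (rep (f A')) ! i)"
      using fiber[OF q _ A' feq] A' by blast
    show "A' \<in> (\<lambda>(c,i). G q (rep c) (pl (rep c) ! i)) ` (f ` Bs q n \<times> {..<n})"
      using i A' by (auto intro!: image_eqI[of _ _ "(f A', i)"])
  qed
  have fsub: "f ` Bs q n \<subseteq> I0 q n" using fQ by auto
  have finf: "finite (f ` Bs q n)" using finite_subset[OF fsub finQ] .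
  have "card (Bs q n) \<le> card ((\<lambda>(c,i). G q (rep c) (pl (rep c) ! i)) ` (f ` Bs q n \<times> {..<n}))"
    by (rule card_mono[OF _ cover]) (use finf in auto)
  also have "\<dots> \<le> card (f ` Bs q n \<times> {..<n})" by (rule card_image_le) (use finf in auto)
  also have "\<dots> = card (f ` Bs q n) * n" by (simp add: card_cartesian_product)
  also have "\<dots> \<le> card (I0 q n) * n" using card_mono[OF finQ fsub] by simp
  finally have c1: "card (Bs q n) \<le> card (I0 q n) * n" .
  have "Bs q n = insert 1 ` {C. C \<subseteq> {2..q0 q} \<and> card C = n - 1}"
  proof
    show "Bs q n \<subseteq> insert 1 ` {C. C \<subseteq> {2..q0 q} \<and> card C = n - 1}"
    proof
      fix A assume A: "A \<in> Bs q n"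
      have fin: "finite A" using Bs_finite[OF A] .
      have "A = insert 1 (A - {1})" using A by (auto simp: Bs_def)
      moreover have "A - {1} \<subseteq> {2..q0 q}" using A by (auto simp: Bs_def)
      moreover have "card (A - {1}) = n - 1" using A fin by (auto simp: Bs_def)
      ultimately show "A \<in> insert 1 ` {C. C \<subseteq> {2..q0 q} \<and> card C = n - 1}" by blast
    qed
    show "insert 1 ` {C. C \<subseteq> {2..q0 q} \<and> card C = n - 1} \<subseteq> Bs q n"
    proof
      fix A assume "A \<in> insert 1 ` {C. C \<subseteq> {2..q0 q} \<and> card C = n - 1}"
      then obtain C where C: "C \<subseteq> {2..q0 q}" "card C = n - 1" "A = insert 1 C" by auto
      have fin: "finite C" using C(1) finite_subset by blast
      have "1 \<notin> C" using C(1) by auto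
      hence "card A = n" using C fin assms(4) by simp
      moreover have "A \<subseteq> {1..q0 q}" using C assms by auto
      ultimately show "A \<in> Bs q n" using C by (auto simp: Bs_def)
    qed
  qed
  moreover have "inj_on (insert 1) {C. C \<subseteq> {2..q0 q} \<and> card C = n - 1}"
    unfolding inj_on_def by (metis (no_types, lifting) Diff_insert_absorb atLeastAtMost_iff
        mem_Collect_eq numeral_le_one_iff semiring_norm(69) subset_iff)
  ultimately have "card (Bs q n) = card {C. C \<subseteq> {2..q0 q} \<and> card C = n - 1}"
    by (simp add: card_image)
  also have "\<dots> = (q0 q - 1) choose (n - 1)" by (simp add: n_subsets)
  finally have c2: "card (Bs q n) = (q0 q - 1) choose (n - 1)" .
  have c3: "n * (q0 q choose n) = q0 q * ((q0 q - 1) choose (n - 1))"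
    using times_binomial_minus1_eq[of n "q0 q"] assms(4) by simp
  have "n * (q0 q choose n) \<le> n * (q0 q * card (I0 q n))"
    using c1 c2 c3 by (metis mult.commute mult.left_commute mult_le_mono2)
  hence c4: "q0 q choose n \<le> q0 q * card (I0 q n)" using assms(4) by simp
  have pos: "real (q0 q) > 0" using assms by simp
  have "real (q0 q choose n) \<le> real (q0 q) * real (card (I0 q n))"
    using c4 by (metis of_nat_le_iff of_nat_mult)
  thus ?thesis using pos by (simp add: field_simps)
qed

end
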